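(* Consider the setting in the context, and let $\mathbf{R}=(R_1,R_2)$ and $\mathbf{R}'=(R_1',R_2')$ be two pairs of payoff matrices. Suppose the modified 4-player game is $\alpha$-strongly monotone (for some $\alpha>0$) for the payoff pair $\mathbf{R}'$ (the strong monotonicity condition does not depend on the payoffs). Let $z^*=(\pi_1^*,\pi_2^*,p_1^*,p_2^* )$ and $z^\dagger=(\pi_1^\dagger,\pi_2^\dagger,p_1^\dagger,p_2^\dagger)$ be Nash equilibria of the modified 4-player game with payoffs $\mathbf{R}$ and $\mathbf{R}'$ respectively. Then $$\|z^*-z^\dagger\|_2\le \frac{2\left(\sqrt{|\mathcal{A}_1|}+\sqrt{|\mathcal{A}_2|}\right)\|\mathbf{R}-\mathbf{R}'\|_\infty}{\alpha},$$ and consequently the corresponding RQEs $\pi^*=(\pi_1^*,\pi_2^* )$ and $\pi^\dagger=(\pi_1^\dagger,\pi_2^\dagger)$ of the original game satisfy $$\|\pi^*-\pi^\dagger\|_2\le \frac{2\left(\sqrt{|\mathcal{A}_1|}+\sqrt{|\mathcal{A}_2|}\right)\|\mathbf{R}-\mathbf{R}'\|_\infty}{\alpha}.$$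
   Context: Two players $i\in\{1,2\}$ have finite action sets $\mathcal{A}_1,\mathcal{A}_2$; $-i$ denotes the other player, $\Delta_n$ the probability simplex in $\mathbb{R}^n$. Payoff matrices $R_1\in\mathbb{R}^{|\mathcal{A}_1|\times|\mathcal{A}_2|}$, $R_2\in\mathbb{R}^{|\mathcal{A}_2|\times|\mathcal{A}_1|}$; $\|\mathbf{R}-\mathbf{R}'\|_\infty$ denotes the largest absolute value of an entry of $R_1-R_1'$ or $R_2-R_2'$. For each $i$ fix $\epsilon_i>0$, a differentiable strictly convex $\nu_i$ (on an open set containing $\Delta_{|\mathcal{A}_i|}$), and a differentiable $D_i:\Delta_{|\mathcal{A}_{-i}|}\times\Delta_{|\mathcal{A}_{-i}|}\to\mathbb{R}$ convex in its first argument. Player $i$ minimizes $f_i(\pi_i,\pi_{-i};R_i)=\sup_{p_i\in\Delta_{|\mathcal{A}_{-i}|}}[-\pi_i^TR_ip_i-D_i(p_i,\pi_{-i})]+\epsilon_i\nu_i(\pi_i)$; an RQE is a pair $(\pi_1^*,\pi_2^* )$ with $f_i(\pi_i^*,\pi_{-i}^*;R_i)\le f_i(\pi_i,\pi_{-i}^*;R_i)$ for all $\pi_i\in\Delta_{|\mathcal{A}_i|}$, $i=1,2$; for a Nash equilibrium $(\pi_1,\pi_2,p_1,p_2)$ of the modified game below, $(\pi_1,\pi_2)$ is its corresponding RQE. The modified 4-player game has joint strategy $z=(\pi_1,\pi_2,p_1,p_2)\in\mathcal{Z}=\Delta_{|\mathcal{A}_1|}\times\Delta_{|\mathcal{A}_2|}\times\Delta_{|\mathcal{A}_2|}\times\Delta_{|\mathcal{A}_1|}$;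 player $\pi_i$ minimizes $J_i(z)=-\pi_i^TR_ip_i-D_i(p_i,\pi_{-i})+\epsilon_i\nu_i(\pi_i)$ over $\pi_i\in\Delta_{|\mathcal{A}_i|}$ and adversary $p_i$ minimizes $\bar J_i(z)=\pi_i^TR_ip_i+D_i(p_i,\pi_{-i})-\epsilon_i\nu_i(\pi_i)$ over $p_i\in\Delta_{|\mathcal{A}_{-i}|}$. Its gradient operator is $F(z;\mathbf{R})=(-R_1p_1+\epsilon_1\nabla\nu_1(\pi_1),\,-R_2p_2+\epsilon_2\nabla\nu_2(\pi_2),\,R_1^T\pi_1+\nabla_{p_1}D_1(p_1,\pi_2),\,R_2^T\pi_2+\nabla_{p_2}D_2(p_2,\pi_1))$. The game is $\alpha$-strongly monotone if $(z-z')^T(F(z;\mathbf{R})-F(z';\mathbf{R}))\ge\alpha\|z-z'\|_2^2$ for all $z,z'\in\mathcal{Z}$; since the payoff terms cancel in this expression, the condition is independent of $\mathbf{R}$. *)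

theory Defs
  imports "HOL-Analysis.Analysis"
begin

definition strict_convex_on :: "'a::real_vector set \<Rightarrow> ('a \<Rightarrow> real) \<Rightarrow> bool" where
  "strict_convex_on S f \<longleftrightarrow> convex S \<and>
     (\<forall>x\<in>S. \<forall>y\<in>S. x \<noteq> y \<longrightarrow> (\<forall>u. 0 < u \<and> u < 1 \<longrightarrow>
        f ((1 - u) *\<^sub>R x + u *\<^sub>R y) < (1 - u) * f x + u * f y))"

definition prob_simplex :: "(real ^ 'n::finite) set" where
  "prob_simplex = {x. (\<forall>i. 0 \<le> x $ i) \<and> (\<Sum>i\<in>UNIV. x $ i) = 1}"

definition maxabs :: "real ^ 'n::finite ^ 'm::finite \<Rightarrow> real" where
  "maxabs A = Max {\<bar>A $ i $ j\<bar> | i j. True}"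

definition payoff_dist ::
  "(real ^ 'a2::finite ^ 'a1::finite) \<times> (real ^ 'a1 ^ 'a2)
   \<Rightarrow> (real ^ 'a2 ^ 'a1) \<times> (real ^ 'a1 ^ 'a2) \<Rightarrow> real" where
  "payoff_dist R R' = max (maxabs (fst R - fst R')) (maxabs (snd R - snd R'))"

definition Zset :: "((real ^ 'a1::finite) \<times> (real ^ 'a2::finite) \<times> (real ^ 'a2) \<times> (real ^ 'a1)) set" where
  "Zset = prob_simplex \<times> prob_simplex \<times> prob_simplex \<times> prob_simplex"

definition J1 where
  "J1 R1 D1 eps1 nu1 = (\<lambda>(\<pi>1, \<pi>2, p1, p2). - (\<pi>1 \<bullet> (R1 *v p1)) - D1 p1 \<pi>2 + eps1 * nu1 \<pi>1)"
definition J2 where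
  "J2 R2 D2 eps2 nu2 = (\<lambda>(\<pi>1, \<pi>2, p1, p2). - (\<pi>2 \<bullet> (R2 *v p2)) - D2 p2 \<pi>1 + eps2 * nu2 \<pi>2)"
definition Jbar1 where
  "Jbar1 R1 D1 eps1 nu1 = (\<lambda>(\<pi>1, \<pi>2, p1, p2). \<pi>1 \<bullet> (R1 *v p1) + D1 p1 \<pi>2 - eps1 * nu1 \<pi>1)"
definition Jbar2 where
  "Jbar2 R2 D2 eps2 nu2 = (\<lambda>(\<pi>1, \<pi>2, p1, p2). \<pi>2 \<bullet> (R2 *v p2) + D2 p2 \<pi>1 - eps2 * nu2 \<pi>2)"

definition modified_NE where
  "modified_NE R D1 D2 eps1 eps2 nu1 nu2 z \<longleftrightarrow>
     (case z of (\<pi>1, \<pi>2, p1, p2) \<Rightarrow>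
       z \<in> Zset \<and>
       (\<forall>x\<in>prob_simplex. J1 (fst R) D1 eps1 nu1 z \<le> J1 (fst R) D1 eps1 nu1 (x, \<pi>2, p1, p2)) \<and>
       (\<forall>x\<in>prob_simplex. J2 (snd R) D2 eps2 nu2 z \<le> J2 (snd R) D2 eps2 nu2 (\<pi>1, x, p1, p2)) \<and>
       (\<forall>x\<in>prob_simplex. Jbar1 (fst R) D1 eps1 nu1 z \<le> Jbar1 (fst R) D1 eps1 nu1 (\<pi>1, \<pi>2, x, p2)) \<and>
       (\<forall>x\<in>prob_simplex. Jbar2 (snd R) D2 eps2 nu2 z \<le> Jbar2 (snd R) D2 eps2 nu2 (\<pi>1, \<pi>2, p1, x)))"

text \<open>Gradient operator \<open>F(z;R)\<close>; \<open>g1,g2\<close> are the gradients of \<open>\<nu>1,\<nu>2\<close> and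
  \<open>dD1,dD2\<close> the gradients of \<open>D1,D2\<close> with respect to their first argument.\<close>
definition Fop where
  "Fop R eps1 eps2 g1 g2 dD1 dD2 = (\<lambda>(\<pi>1, \<pi>2, p1, p2).
     (- (fst R *v p1) + eps1 *\<^sub>R g1 \<pi>1,
      - (snd R *v p2) + eps2 *\<^sub>R g2 \<pi>2,
      transpose (fst R) *v \<pi>1 + dD1 p1 \<pi>2,
      transpose (snd R) *v \<pi>2 + dD2 p2 \<pi>1))"

definition strongly_monotone_game where
  "strongly_monotone_game \<alpha> R eps1 eps2 g1 g2 dD1 dD2 \<longleftrightarrow>
     (\<forall>z\<in>Zset. \<forall>z'\<in>Zset.
        (z - z') \<bullet> (Fop R eps1 eps2 g1 g2 dD1 dD2 z - Fop R eps1 eps2 g1 g2 dD1 dD2 z')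
          \<ge> \<alpha> * (norm (z - z'))\<^sup>2)"

end

theory Submission
  imports Defs
begin

lemma convex_prob_simplex: "convex (prob_simplex :: (real ^ 'n::finite) set)"
  unfolding convex_def prob_simplex_def
  by (auto simp: sum.distrib sum_distrib_left[symmetric])

lemma mv_bound:
  fixes A :: "real ^ 'n::finite ^ 'm::finite"
  assumes A: "\<And>i j. \<bar>A $ i $ j\<bar> \<le> M" and x: "x \<in> prob_simplex"
  shows "norm (A *v x) \<le> sqrt (real CARD('m)) * M"
proof -
  have x0: "\<And>j. 0 \<le> x $ j" and x1: "(\<Sum>j\<in>UNIV. x $ j) = 1" using x by (auto simp: prob_simplex_def)
  have comp: "\<bar>(A *v x) $ i\<bar> \<le> M" for i
  proof -
    have "\<bar>(A *v x) $ i\<bar> = \<bar>\<Sum>j\<in>UNIV. A $ i $ j * x $ j\<bar>" by (simp add: matrix_vector_mult_def)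
    also have "\<dots> \<le> (\<Sum>j\<in>UNIV. \<bar>A $ i $ j * x $ j\<bar>)" by (rule sum_abs)
    also have "\<dots> \<le> (\<Sum>j\<in>UNIV. M * x $ j)"
      by (rule sum_mono) (simp add: abs_mult x0 mult_right_mono A)
    also have "\<dots> = M" by (simp add: sum_distrib_left[symmetric] x1)
    finally show ?thesis .
  qed
  have M0: "0 \<le> M" using comp[of undefined] by linarith
  have "norm (A *v x) = sqrt (\<Sum>i\<in>UNIV. ((A *v x) $ i)^2)"
    by (simp add: norm_vec_def L2_set_def)
  also have "\<dots> \<le> sqrt (\<Sum>i::'m\<in>UNIV. M^2)"
  proof -
    have "(\<Sum>i\<in>UNIV. ((A *v x) $ i)^2) \<le> (\<Sum>i::'m\<in>UNIV. M^2)"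
    proof (rule sum_mono)
      fix i show "((A *v x) $ i)^2 \<le> M^2" by (metis abs_ge_zero comp power2_abs power_mono)
    qed
    thus ?thesis by simp
  qed
  also have "\<dots> = sqrt (real CARD('m)) * M" using M0 by (simp add: real_sqrt_mult)
  finally show ?thesis .
qed

lemma maxabs_ge: "\<bar>A $ i $ j\<bar> \<le> maxabs A"
proof -
  have "{\<bar>A $ i $ j\<bar> | i j. True} = (\<lambda>(i, j). \<bar>A $ i $ j\<bar>) ` UNIV" by auto
  hence fin: "finite {\<bar>A $ i $ j\<bar> | i j. True}" by simp
  show ?thesis unfolding maxabs_def by (rule Max_ge[OF fin]) blast
qed

lemma transpose_diff_mv:
  fixes A B :: "real ^ 'n::finite ^ 'm::finite"
  shows "transpose A *v a - transpose B *v a = transpose (A - B) *v a"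
  by (simp add: transpose_def matrix_vector_mult_def vec_eq_iff sum_subtractf algebra_simps)

lemma transpose_entry: "transpose A $ i $ j = A $ j $ i"
  by (simp add: transpose_def)
lemma first_order:
  fixes f :: "'a::real_inner \<Rightarrow> real"
  assumes d: "(f has_derivative (\<lambda>h. g \<bullet> h)) (at x)" and S: "convex S" "x \<in> S" "y \<in> S"
    and mn: "\<forall>y\<in>S. f x \<le> f y"
  shows "0 \<le> g \<bullet> (y - x)"
proof (rule ccontr)
  assume "\<not> ?thesis" hence neg: "g \<bullet> (y - x) < 0" by simp
  have lin: "((\<lambda>t. x + t *\<^sub>R (y - x)) has_derivative (\<lambda>t. t *\<^sub>R (y - x))) (at 0)"
    by (auto intro!: derivative_eq_intros)
  have d': "(f has_derivative (\<lambda>h. g \<bullet> h)) (at (x + 0 *\<^sub>R (y - x)))" using d by simp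
  have "((\<lambda>t. f (x + t *\<^sub>R (y - x))) has_derivative (\<lambda>t. g \<bullet> (t *\<^sub>R (y - x)))) (at 0)"
    using has_derivative_compose[OF lin d'] by (simp add: o_def)
  moreover have "(\<lambda>t. g \<bullet> (t *\<^sub>R (y - x))) = (*) (g \<bullet> (y - x))"
    by (auto simp: fun_eq_iff)
  ultimately have "((\<lambda>t. f (x + t *\<^sub>R (y - x))) has_real_derivative (g \<bullet> (y - x))) (at 0)"
    by (simp add: has_field_derivative_def)
  from DERIV_neg_dec_right[OF this neg] obtain e where e: "e > 0"
    "\<And>h. h > 0 \<Longrightarrow> h < e \<Longrightarrow> f (x + 0 *\<^sub>R (y - x)) > f (x + (0 + h) *\<^sub>R (y - x))" by blast
  define h where "h = min (e/2) 1"
  have h: "h > 0" "h < e" "h \<le> 1" using e by (auto simp: h_def)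
  have "x + h *\<^sub>R (y - x) = (1 - h) *\<^sub>R x + h *\<^sub>R y" by (simp add: algebra_simps)
  also have "\<dots> \<in> S" using convexD[OF S(1) S(2) S(3), of "1-h" h] h by simp
  finally have "f x \<le> f (x + h *\<^sub>R (y - x))" using mn by blast
  with e(2)[OF h(1,2)] show False by simp
qed

lemma NE_VI:
  fixes R :: "(real ^ 'a2::finite ^ 'a1::finite) \<times> (real ^ 'a1 ^ 'a2)"
    and z z' :: "(real ^ 'a1) \<times> (real ^ 'a2) \<times> (real ^ 'a2) \<times> (real ^ 'a1)"
    and D1 :: "real ^ 'a2 \<Rightarrow> real ^ 'a2 \<Rightarrow> real"
    and D2 :: "real ^ 'a1 \<Rightarrow> real ^ 'a1 \<Rightarrow> real"
  assumes S1: "prob_simplex \<subseteq> S1"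
    and g1: "\<And>x. x \<in> S1 \<Longrightarrow> (nu1 has_derivative (\<lambda>h. g1 x \<bullet> h)) (at x)"
    and S2: "prob_simplex \<subseteq> S2"
    and g2: "\<And>x. x \<in> S2 \<Longrightarrow> (nu2 has_derivative (\<lambda>h. g2 x \<bullet> h)) (at x)"
    and U1: "prob_simplex \<times> prob_simplex \<subseteq> U1"
    and dD1: "\<And>p q. (p, q) \<in> U1 \<Longrightarrow> ((\<lambda>x. D1 x q) has_derivative (\<lambda>h. dD1 p q \<bullet> h)) (at p)"
    and U2: "prob_simplex \<times> prob_simplex \<subseteq> U2"
    and dD2: "\<And>p q. (p, q) \<in> U2 \<Longrightarrow> ((\<lambda>x. D2 x q) has_derivative (\<lambda>h. dD2 p q \<bullet> h)) (at p)"
    and NE: "modified_NE R D1 D2 eps1 eps2 nu1 nu2 z"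
    and z': "z' \<in> Zset"
  shows "0 \<le> (z' - z) \<bullet> Fop R eps1 eps2 g1 g2 dD1 dD2 z"
proof -
  obtain a1 a2 b1 b2 where z: "z = (a1, a2, b1, b2)" by (cases z) auto
  obtain c1 c2 d1 d2 where zz: "z' = (c1, c2, d1, d2)" by (cases z') auto
  obtain R1 R2 where R: "R = (R1, R2)" by (cases R) auto
  have inZ: "a1 \<in> prob_simplex" "a2 \<in> prob_simplex" "b1 \<in> prob_simplex" "b2 \<in> prob_simplex"
    using NE by (auto simp: modified_NE_def z Zset_def)
  have inZ': "c1 \<in> prob_simplex" "c2 \<in> prob_simplex" "d1 \<in> prob_simplex" "d2 \<in> prob_simplex"
    using z' by (auto simp: zz Zset_def)
  have m1: "\<forall>x\<in>prob_simplex. - (a1 \<bullet> (R1 *v b1)) - D1 b1 a2 + eps1 * nu1 a1 \<le> - (x \<bullet> (R1 *v b1)) - D1 b1 a2 + eps1 * nu1 x"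
    using NE by (simp add: modified_NE_def z R J1_def)
  have m2: "\<forall>x\<in>prob_simplex. - (a2 \<bullet> (R2 *v b2)) - D2 b2 a1 + eps2 * nu2 a2 \<le> - (x \<bullet> (R2 *v b2)) - D2 b2 a1 + eps2 * nu2 x"
    using NE by (simp add: modified_NE_def z R J2_def)
  have m3: "\<forall>x\<in>prob_simplex. a1 \<bullet> (R1 *v b1) + D1 b1 a2 - eps1 * nu1 a1 \<le> a1 \<bullet> (R1 *v x) + D1 x a2 - eps1 * nu1 a1"
    using NE by (simp add: modified_NE_def z R Jbar1_def)
  have m4: "\<forall>x\<in>prob_simplex. a2 \<bullet> (R2 *v b2) + D2 b2 a1 - eps2 * nu2 a2 \<le> a2 \<bullet> (R2 *v x) + D2 x a1 - eps2 * nu2 a2"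
    using NE by (simp add: modified_NE_def z R Jbar2_def)
  have e3: "\<And>x. a1 \<bullet> (R1 *v x) = (transpose R1 *v a1) \<bullet> x"
    by (simp add: dot_lmul_matrix)
  have e4: "\<And>x. a2 \<bullet> (R2 *v x) = (transpose R2 *v a2) \<bullet> x"
    by (simp add: dot_lmul_matrix)
  have d1: "((\<lambda>x. - (x \<bullet> (R1 *v b1)) - D1 b1 a2 + eps1 * nu1 x) has_derivative
      (\<lambda>h. (- (R1 *v b1) + eps1 *\<^sub>R g1 a1) \<bullet> h)) (at a1)"
    using g1[of a1] inZ S1
    by (auto intro!: derivative_eq_intros simp: algebra_simps inner_commute)
  have d2: "((\<lambda>x. - (x \<bullet> (R2 *v b2)) - D2 b2 a1 + eps2 * nu2 x) has_derivative
      (\<lambda>h. (- (R2 *v b2) + eps2 *\<^sub>R g2 a2) \<bullet> h)) (at a2)"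
    using g2[of a2] inZ S2
    by (auto intro!: derivative_eq_intros simp: algebra_simps inner_commute)
  have d3: "((\<lambda>x. (transpose R1 *v a1) \<bullet> x + D1 x a2 - eps1 * nu1 a1) has_derivative
      (\<lambda>h. (transpose R1 *v a1 + dD1 b1 a2) \<bullet> h)) (at b1)"
    using dD1[of b1 a2] inZ U1
    by (auto intro!: derivative_eq_intros simp: algebra_simps inner_commute)
  have d4: "((\<lambda>x. (transpose R2 *v a2) \<bullet> x + D2 x a1 - eps2 * nu2 a2) has_derivative
      (\<lambda>h. (transpose R2 *v a2 + dD2 b2 a1) \<bullet> h)) (at b2)"
    using dD2[of b2 a1] inZ U2
    by (auto intro!: derivative_eq_intros simp: algebra_simps inner_commute)
  have i1: "0 \<le> (- (R1 *v b1) + eps1 *\<^sub>R g1 a1) \<bullet> (c1 - a1)"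
    by (rule first_order[OF d1 convex_prob_simplex inZ(1) inZ'(1) m1])
  have i2: "0 \<le> (- (R2 *v b2) + eps2 *\<^sub>R g2 a2) \<bullet> (c2 - a2)"
    by (rule first_order[OF d2 convex_prob_simplex inZ(2) inZ'(2) m2])
  have i3: "0 \<le> (transpose R1 *v a1 + dD1 b1 a2) \<bullet> (d1 - b1)"
    by (rule first_order[OF d3 convex_prob_simplex inZ(3) inZ'(3)]) (use m3 e3 in simp)
  have i4: "0 \<le> (transpose R2 *v a2 + dD2 b2 a1) \<bullet> (d2 - b2)"
    by (rule first_order[OF d4 convex_prob_simplex inZ(4) inZ'(4)]) (use m4 e4 in simp)
  have "(z' - z) \<bullet> Fop R eps1 eps2 g1 g2 dD1 dD2 z =
      (c1 - a1) \<bullet> (- (R1 *v b1) + eps1 *\<^sub>R g1 a1) + (c2 - a2) \<bullet> (- (R2 *v b2) + eps2 *\<^sub>R g2 a2)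
      + (d1 - b1) \<bullet> (transpose R1 *v a1 + dD1 b1 a2) + (d2 - b2) \<bullet> (transpose R2 *v a2 + dD2 b2 a1)"
    unfolding z zz R Fop_def by (simp only: prod.case fst_conv snd_conv diff_Pair inner_Pair add.assoc)
  then show ?thesis using i1 i2 i3 i4 by (simp add: inner_commute)
qed

theorem theorem1:
  fixes R R' :: "(real ^ 'a2::finite ^ 'a1::finite) \<times> (real ^ 'a1 ^ 'a2)"
    and eps1 eps2 \<alpha> :: real
    and nu1 :: "real ^ 'a1 \<Rightarrow> real" and g1 :: "real ^ 'a1 \<Rightarrow> real ^ 'a1"
    and nu2 :: "real ^ 'a2 \<Rightarrow> real" and g2 :: "real ^ 'a2 \<Rightarrow> real ^ 'a2"
    and S1 :: "(real ^ 'a1) set" and S2 :: "(real ^ 'a2) set"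
    and D1 :: "real ^ 'a2 \<Rightarrow> real ^ 'a2 \<Rightarrow> real"
    and dD1 :: "real ^ 'a2 \<Rightarrow> real ^ 'a2 \<Rightarrow> real ^ 'a2"
    and D2 :: "real ^ 'a1 \<Rightarrow> real ^ 'a1 \<Rightarrow> real"
    and dD2 :: "real ^ 'a1 \<Rightarrow> real ^ 'a1 \<Rightarrow> real ^ 'a1"
    and U1 :: "((real ^ 'a2) \<times> (real ^ 'a2)) set" and U2 :: "((real ^ 'a1) \<times> (real ^ 'a1)) set"
    and zs zd :: "(real ^ 'a1) \<times> (real ^ 'a2) \<times> (real ^ 'a2) \<times> (real ^ 'a1)"
  assumes eps1: "eps1 > 0" and eps2: "eps2 > 0"
    and S1: "open S1" "prob_simplex \<subseteq> S1" "strict_convex_on S1 nu1"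
    and g1: "\<And>x. x \<in> S1 \<Longrightarrow> (nu1 has_derivative (\<lambda>h. g1 x \<bullet> h)) (at x)"
    and S2: "open S2" "prob_simplex \<subseteq> S2" "strict_convex_on S2 nu2"
    and g2: "\<And>x. x \<in> S2 \<Longrightarrow> (nu2 has_derivative (\<lambda>h. g2 x \<bullet> h)) (at x)"
    and U1: "open U1" "prob_simplex \<times> prob_simplex \<subseteq> U1"
      "\<And>w. w \<in> U1 \<Longrightarrow> (\<lambda>(p, q). D1 p q) differentiable (at w)"
    and dD1: "\<And>p q. (p, q) \<in> U1 \<Longrightarrow> ((\<lambda>x. D1 x q) has_derivative (\<lambda>h. dD1 p q \<bullet> h)) (at p)"
    and cvx1: "\<And>q. q \<in> prob_simplex \<Longrightarrow> convex_on prob_simplex (\<lambda>p. D1 p q)"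
    and U2: "open U2" "prob_simplex \<times> prob_simplex \<subseteq> U2"
      "\<And>w. w \<in> U2 \<Longrightarrow> (\<lambda>(p, q). D2 p q) differentiable (at w)"
    and dD2: "\<And>p q. (p, q) \<in> U2 \<Longrightarrow> ((\<lambda>x. D2 x q) has_derivative (\<lambda>h. dD2 p q \<bullet> h)) (at p)"
    and cvx2: "\<And>q. q \<in> prob_simplex \<Longrightarrow> convex_on prob_simplex (\<lambda>p. D2 p q)"
    and alpha: "\<alpha> > 0"
    and mono: "strongly_monotone_game \<alpha> R' eps1 eps2 g1 g2 dD1 dD2"
    and NE: "modified_NE R D1 D2 eps1 eps2 nu1 nu2 zs"
    and NE': "modified_NE R' D1 D2 eps1 eps2 nu1 nu2 zd"
  shows "norm (zs - zd)
           \<le> 2 * (sqrt (real CARD('a1)) + sqrt (real CARD('a2))) * payoff_dist R R' / \<alpha>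
     \<and> norm ((fst zs, fst (snd zs)) - (fst zd, fst (snd zd)))
           \<le> 2 * (sqrt (real CARD('a1)) + sqrt (real CARD('a2))) * payoff_dist R R' / \<alpha>"
proof -
  obtain a1 a2 b1 b2 where zs: "zs = (a1, a2, b1, b2)" by (cases zs) auto
  obtain c1 c2 d1 d2 where zd: "zd = (c1, c2, d1, d2)" by (cases zd) auto
  obtain R1 R2 where R: "R = (R1, R2)" by (cases R) auto
  obtain R1' R2' where R': "R' = (R1', R2')" by (cases R') auto
  define F where "F = Fop R eps1 eps2 g1 g2 dD1 dD2"
  define F' where "F' = Fop R' eps1 eps2 g1 g2 dD1 dD2"
  define P where "P = payoff_dist R R'"
  define K where "K = 2 * (sqrt (real CARD('a1)) + sqrt (real CARD('a2))) * P"
  have zsZ: "zs \<in> Zset" using NE by (simp add: modified_NE_def zs)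
  have zdZ: "zd \<in> Zset" using NE' by (simp add: modified_NE_def zd)
  have inZ: "a1 \<in> prob_simplex" "a2 \<in> prob_simplex" "b1 \<in> prob_simplex" "b2 \<in> prob_simplex"
    using zsZ by (auto simp: zs Zset_def)
  have vi1: "0 \<le> (zd - zs) \<bullet> F zs" unfolding F_def
    by (rule NE_VI[OF S1(2) g1 S2(2) g2 U1(2) dD1 U2(2) dD2 NE zdZ])
  have vi2: "0 \<le> (zs - zd) \<bullet> F' zd" unfolding F'_def
    by (rule NE_VI[OF S1(2) g1 S2(2) g2 U1(2) dD1 U2(2) dD2 NE' zsZ])
  have mn: "\<alpha> * (norm (zs - zd))\<^sup>2 \<le> (zs - zd) \<bullet> (F' zs - F' zd)"
    using mono zsZ zdZ unfolding strongly_monotone_game_def F'_def by blast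
  have "(zd - zs) \<bullet> F zs = - ((zs - zd) \<bullet> F zs)"
    by (metis inner_minus_left minus_diff_eq)
  hence "(zs - zd) \<bullet> (F' zs - F' zd) \<le> (zs - zd) \<bullet> (F' zs - F zs)"
    using vi1 vi2 by (simp add: inner_diff_right)
  also have "\<dots> \<le> norm (zs - zd) * norm (F' zs - F zs)" by (rule norm_cauchy_schwarz)
  finally have main: "\<alpha> * (norm (zs - zd))\<^sup>2 \<le> norm (zs - zd) * norm (F' zs - F zs)"
    using mn by linarith
  have ent1: "\<bar>(R1' - R1) $ i $ j\<bar> \<le> P" for i j
  proof -
    have "\<bar>(R1' - R1) $ i $ j\<bar> = \<bar>(R1 - R1') $ i $ j\<bar>" by simp
    also have "\<dots> \<le> maxabs (R1 - R1')" by (rule maxabs_ge)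
    finally show ?thesis by (simp add: P_def payoff_dist_def R R')
  qed
  have ent2: "\<bar>(R2' - R2) $ i $ j\<bar> \<le> P" for i j
  proof -
    have "\<bar>(R2' - R2) $ i $ j\<bar> = \<bar>(R2 - R2') $ i $ j\<bar>" by simp
    also have "\<dots> \<le> maxabs (R2 - R2')" by (rule maxabs_ge)
    finally show ?thesis by (simp add: P_def payoff_dist_def R R')
  qed
  have n1: "norm ((R1' - R1) *v b1) \<le> sqrt (real CARD('a1)) * P"
    by (rule mv_bound[OF ent1 inZ(3)])
  have n2: "norm ((R2' - R2) *v b2) \<le> sqrt (real CARD('a2)) * P"
    by (rule mv_bound[OF ent2 inZ(4)])
  have n3: "norm (transpose (R1' - R1) *v a1) \<le> sqrt (real CARD('a2)) * P"
    by (rule mv_bound[OF _ inZ(1)]) (simp only: transpose_entry ent1)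
  have n4: "norm (transpose (R2' - R2) *v a2) \<le> sqrt (real CARD('a1)) * P"
    by (rule mv_bound[OF _ inZ(2)]) (simp only: transpose_entry ent2)
  have FD: "F' zs - F zs = (- ((R1' - R1) *v b1), - ((R2' - R2) *v b2),
      transpose (R1' - R1) *v a1, transpose (R2' - R2) *v a2)"
    unfolding F_def F'_def zs R R' Fop_def
    by (simp only: prod.case fst_conv snd_conv diff_Pair transpose_diff_mv[symmetric]
          matrix_vector_mult_diff_rdistrib) (simp add: algebra_simps)
  have "norm (F' zs - F zs) \<le> norm ((R1' - R1) *v b1) + (norm ((R2' - R2) *v b2) +
      (norm (transpose (R1' - R1) *v a1) + norm (transpose (R2' - R2) *v a2)))"
    unfolding FD
  proof -
    have gen: "norm (- x, - y, u, v) \<le> norm x + (norm y + (norm u + norm v))"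
      for x :: "real^'a1" and y :: "real^'a2" and u :: "real^'a2" and v :: "real^'a1"
    proof -
      have h1: "norm (- x, - y, u, v) \<le> norm (- x) + norm (- y, u, v)" by (rule norm_Pair_le)
      have h2: "norm (- y, u, v) \<le> norm (- y) + norm (u, v)" by (rule norm_Pair_le)
      have h3: "norm (u, v) \<le> norm u + norm v" by (rule norm_Pair_le)
      show ?thesis using h1 h2 h3 by simp
    qed
    show "norm (- ((R1' - R1) *v b1), - ((R2' - R2) *v b2), transpose (R1' - R1) *v a1, transpose (R2' - R2) *v a2)
      \<le> norm ((R1' - R1) *v b1) + (norm ((R2' - R2) *v b2) +
      (norm (transpose (R1' - R1) *v a1) + norm (transpose (R2' - R2) *v a2)))"
      by (rule gen)
  qed
  also have "\<dots> \<le> K" using n1 n2 n3 n4 by (simp add: K_def algebra_simps)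
  finally have FK: "norm (F' zs - F zs) \<le> K" .
  have part1: "norm (zs - zd) \<le> K / \<alpha>"
  proof (cases "norm (zs - zd) = 0")
    case True
    have "0 \<le> K" using FK norm_ge_zero order_trans by blast
    thus ?thesis using True alpha by simp
  next
    case False
    hence pos: "norm (zs - zd) > 0" by simp
    have "\<alpha> * norm (zs - zd) * norm (zs - zd) \<le> K * norm (zs - zd)"
    proof -
      have "norm (zs - zd) * norm (F' zs - F zs) \<le> norm (zs - zd) * K"
        using FK by (simp add: mult_left_mono)
      thus ?thesis using main by (simp add: power2_eq_square algebra_simps)
    qed
    hence "\<alpha> * norm (zs - zd) \<le> K" using pos by simp
    thus ?thesis using alpha by (simp add: field_simps)
  qed
  have "norm ((fst zs, fst (snd zs)) - (fst zd, fst (snd zd))) \<le> norm (zs - zd)"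
    unfolding zs zd
    by (simp add: norm_Pair)
  thus ?thesis using part1 by (simp add: K_def P_def)
qed

end
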